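(* For every $X\in L^\infty$ and every sub-$\sigma$-field $\mathcal{G}\subseteq\mathcal{F}$, the conditional expectation $\mathbb{E}[X\mid\mathcal{G}]$ is non-empty.
   Context: $\mathbb{K}$ is a local field with non-archimedean absolute value $|\cdot|$ satisfying $|x|=0 \iff x=0$, $|xy|=|x||y|$, $|x+y|\le|x|\vee|y|$. $(\Omega,\mathcal{F},\mathbb{P})$ is a probability space; all equalities/inequalities between random variables are a.s. $L^\infty$ is the space of $\mathbb{K}$-valued random variables $X$ with $\|X\|_\infty:=\operatorname{ess\,sup}|X|<\infty$; $L^\infty(\mathcal{G})$ is its subspace of $\mathcal{G}$-measurable elements. For a non-negative real random variable $S$, $\operatorname{ess\,sup}\{S\mid\mathcal{G}\}:=\sup_{p\ge1}\mathbb{E}[S^p\mid\mathcal{G}]^{1/p}$ (usual real conditional expectation), and $\|X\|_\mathcal{G}:=\operatorname{ess\,sup}\{|X|\mid\mathcal{G}\}$. The conditional expectation is the set $\mathbb{E}[X\mid\mathcal{G}]:=\{Y\in L^\infty(\mathcal{G}): \|X-Y\|_\mathcal{G}\le\|X-Z\|_\mathcal{G}\ \text{a.s. for all } Z\in L^\infty(\mathcal{G})\}$. *)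

theory Defs
  imports "HOL-Probability.Probability"
begin

definition nonarch_abs :: "('k::field \<Rightarrow> real) \<Rightarrow> bool" where
  "nonarch_abs a \<longleftrightarrow> (\<forall>x. 0 \<le> a x) \<and> (\<forall>x. a x = 0 \<longleftrightarrow> x = 0)
     \<and> (\<forall>x y. a (x * y) = a x * a y) \<and> (\<forall>x y. a (x + y) \<le> max (a x) (a y))"

definition kball_seq_compact :: "('k::field \<Rightarrow> real) \<Rightarrow> real \<Rightarrow> bool" where
  "kball_seq_compact a r \<longleftrightarrow>
     (\<forall>s::nat \<Rightarrow> 'k. (\<forall>n. a (s n) \<le> r) \<longrightarrow>
        (\<exists>h l. strict_mono h \<and> a l \<le> r \<and> (\<lambda>n. a (s (h n) - l)) \<longlonglongrightarrow> 0))"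

text \<open>Local field with non-archimedean absolute value: non-discrete (nontrivial absolute
  value) and locally compact for the metric induced by the absolute value.\<close>
definition local_field :: "('k::field \<Rightarrow> real) \<Rightarrow> bool" where
  "local_field a \<longleftrightarrow> nonarch_abs a \<and> (\<exists>x. a x \<noteq> 0 \<and> a x \<noteq> 1)
     \<and> (\<exists>r>0. kball_seq_compact a r)"

definition kopen :: "('k::field \<Rightarrow> real) \<Rightarrow> 'k set \<Rightarrow> bool" where
  "kopen a U \<longleftrightarrow> (\<forall>x\<in>U. \<exists>r>0. \<forall>y. a (y - x) < r \<longrightarrow> y \<in> U)"

definition kborel :: "('k::field \<Rightarrow> real) \<Rightarrow> 'k measure" where
  "kborel a = sigma UNIV {U. kopen a U}"

definition Linf :: "'w measure \<Rightarrow> ('k::field \<Rightarrow> real) \<Rightarrow> ('w \<Rightarrow> 'k) \<Rightarrow> bool" where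
  "Linf M a X \<longleftrightarrow> X \<in> measurable M (kborel a) \<and> (\<exists>C. AE w in M. a (X w) \<le> C)"

definition LinfG :: "'w measure \<Rightarrow> 'w measure \<Rightarrow> ('k::field \<Rightarrow> real) \<Rightarrow> ('w \<Rightarrow> 'k) \<Rightarrow> bool" where
  "LinfG M G a Y \<longleftrightarrow> Y \<in> measurable G (kborel a) \<and> (\<exists>C. AE w in M. a (Y w) \<le> C)"

definition cond_esssup :: "'w measure \<Rightarrow> 'w measure \<Rightarrow> ('w \<Rightarrow> real) \<Rightarrow> 'w \<Rightarrow> ereal" where
  "cond_esssup M G S w =
     (SUP p\<in>{1::nat..}. ereal (real_cond_exp M G (\<lambda>v. S v ^ p) w powr (1 / real p)))"

definition cond_norm :: "'w measure \<Rightarrow> 'w measure \<Rightarrow> ('k::field \<Rightarrow> real) \<Rightarrow> ('w \<Rightarrow> 'k) \<Rightarrow> 'w \<Rightarrow> ereal" where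
  "cond_norm M G a X = cond_esssup M G (\<lambda>w. a (X w))"

definition cond_exp_K :: "'w measure \<Rightarrow> 'w measure \<Rightarrow> ('k::field \<Rightarrow> real) \<Rightarrow> ('w \<Rightarrow> 'k) \<Rightarrow> ('w \<Rightarrow> 'k) set" where
  "cond_exp_K M G a X = {Y. LinfG M G a Y \<and>
     (\<forall>Z. LinfG M G a Z \<longrightarrow>
        (AE w in M. cond_norm M G a (\<lambda>v. X v - Y v) w \<le> cond_norm M G a (\<lambda>v. X v - Z v) w))}"

end

theory Submission
  imports Defs
begin

locale nafield =
  fixes a :: "'k::field \<Rightarrow> real"
  assumes lf: "local_field a"
begin

lemma na: "nonarch_abs a" using lf unfolding local_field_def by auto
lemma a_nonneg[simp]: "0 \<le> a x" using na unfolding nonarch_abs_def by auto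
lemma a_zero_iff[simp]: "a x = 0 \<longleftrightarrow> x = 0" using na unfolding nonarch_abs_def by auto
lemma a_mult: "a (x * y) = a x * a y" using na unfolding nonarch_abs_def by auto
lemma a_ultra: "a (x + y) \<le> max (a x) (a y)" using na unfolding nonarch_abs_def by auto
lemma a_zero[simp]: "a 0 = 0" by simp
lemma a_one[simp]: "a 1 = 1"
proof -
  have "a 1 = a 1 * a 1" using a_mult[of 1 1] by simp
  moreover have "a 1 \<noteq> 0" by simp
  ultimately show ?thesis by (metis mult_cancel_left1)
qed
lemma a_m1: "a (-1) = 1"
proof -
  have "a (-1) * a (-1) = 1" using a_mult[of "-1" "-1"] by simp
  then show ?thesis using a_nonneg[of "-1"]
    by (metis abs_of_nonneg real_sqrt_abs2 real_sqrt_mult_self real_sqrt_one)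
qed
lemma a_minus[simp]: "a (- x) = a x"
  using a_mult[of "-1" x] a_m1 by simp
lemma a_sym: "a (x - y) = a (y - x)"
  by (metis a_minus minus_diff_eq)
lemma a_tri: "a (x - z) \<le> max (a (x - y)) (a (y - z))"
  using a_ultra[of "x - y" "y - z"] by simp
lemma a_tri_lt: "a (x - y) < r \<Longrightarrow> a (y - z) < r \<Longrightarrow> a (x - z) < r"
  using a_tri[of x z y] by simp
lemma a_tri_le: "a (x - y) \<le> r \<Longrightarrow> a (y - z) \<le> r \<Longrightarrow> a (x - z) \<le> r"
  using a_tri[of x z y] by simp
lemma a_diff_le: "a (x - y) \<le> max (a x) (a y)"
  using a_ultra[of x "-y"] by simp
lemma a_inverse: "a (inverse x) = inverse (a x)"
proof (cases "x = 0")
  case False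
  then have "a x * a (inverse x) = 1" using a_mult[of x "inverse x"] by simp
  moreover have "a x \<noteq> 0" using False by simp
  ultimately show ?thesis by (metis inverse_unique mult.commute)
qed simp
lemma a_divide: "a (x / y) = a x / a y"
  by (simp add: divide_inverse a_mult a_inverse)
lemma a_power: "a (x ^ n) = a x ^ n"
  by (induction n) (simp_all add: a_mult)
lemma a_big: "a x < a z \<Longrightarrow> a z \<le> a (x - z)"
  using a_ultra[of x "z - x"] by (simp add: a_sym)

lemma exists_pi: "\<exists>p. 0 < a p \<and> a p < 1"
proof -
  obtain x where x: "a x \<noteq> 0" "a x \<noteq> 1" using lf unfolding local_field_def by auto
  show ?thesis
  proof (cases "a x < 1")
    case True then show ?thesis using x a_nonneg[of x] by (intro exI[of _ x]) (auto simp del: a_zero_iff simp add: less_le)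
  next
    case False
    then have "a x > 1" using x by auto
    then show ?thesis by (intro exI[of _ "inverse x"]) (simp add: a_inverse inverse_less_1_iff)
  qed
qed

lemma metric: "Metric_space UNIV (\<lambda>x y. a (x - y))"
proof
  fix x y z :: 'k
  show "0 \<le> a (x - y)" by simp
  show "a (x - y) = a (y - x)" by (rule a_sym)
  show "x \<in> UNIV \<Longrightarrow> y \<in> UNIV \<Longrightarrow> (a (x - y) = 0) = (x = y)" by simp
  show "a (x - z) \<le> a (x - y) + a (y - z)"
    using a_tri[of x z y] a_nonneg[of "x - y"] a_nonneg[of "y - z"] by linarith
qed

lemma tb_r:
  assumes r: "0 < r" "kball_seq_compact a r" and e: "0 < e"
  shows "\<exists>L. finite L \<and> (\<forall>x. a x \<le> r \<longrightarrow> (\<exists>y\<in>L. a (x - y) < e))"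
proof -
  interpret Ms: Metric_space UNIV "\<lambda>x y. a (x - y)" by (rule metric)
  let ?S = "{x. a x \<le> r}"
  have "compactin Ms.mtopology ?S"
    unfolding Ms.compactin_sequentially
  proof (intro conjI allI impI)
    fix \<sigma> :: "nat \<Rightarrow> 'k" assume "range \<sigma> \<subseteq> ?S"
    then have "\<forall>n. a (\<sigma> n) \<le> r" by auto
    then obtain h l where hl: "strict_mono h" "a l \<le> r" "(\<lambda>n. a (\<sigma> (h n) - l)) \<longlonglongrightarrow> 0"
      using r(2) unfolding kball_seq_compact_def by blast
    have "limitin Ms.mtopology (\<sigma> \<circ> h) l sequentially" 
      unfolding Ms.limitin_metric_dist_null using hl(3) by (simp add: o_def)
    then show "\<exists>l r. l \<in> ?S \<and> strict_mono r \<and> limitin Ms.mtopology (\<sigma> \<circ> r) l sequentially"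
      using hl by blast
  qed simp
  then have "Ms.mtotally_bounded ?S" by (rule Ms.compactin_imp_mtotally_bounded)
  then obtain K where K: "finite K" "?S \<subseteq> (\<Union>x\<in>K. Ms.mball x e)"
    unfolding Ms.mtotally_bounded_def using e by blast
  show ?thesis
  proof (intro exI[of _ K] conjI allI impI)
    fix x assume "a x \<le> r"
    then obtain y where "y \<in> K" "a (y - x) < e" using K(2) unfolding Ms.mball_def by blast
    then show "\<exists>y\<in>K. a (x - y) < e" by (metis a_sym)
  qed (fact K)
qed

lemma scale_exists:
  assumes "0 < r"
  shows "\<exists>p m. p \<noteq> 0 \<and> 0 < a p ^ m \<and> a p ^ m * R \<le> r"
proof -
  obtain p where p: "0 < a p" "a p < 1" using exists_pi by blast
  obtain m where m: "a p ^ m < r / (\<bar>R\<bar> + 1)"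
    using real_arch_pow_inv[of "r / (\<bar>R\<bar> + 1)" "a p"] p assms by auto
  have pos: "0 < a p ^ m" using p by simp
  have "a p ^ m * R \<le> a p ^ m * (\<bar>R\<bar> + 1)" using pos by (intro mult_left_mono) auto
  also have "\<dots> < r" using m pos_less_divide_eq[of "\<bar>R\<bar> + 1" "a p ^ m" r] by simp
  finally have "a p ^ m * R \<le> r" by simp
  moreover have "p \<noteq> 0" using p(1) by auto
  ultimately show ?thesis using pos by blast
qed

lemma net:
  assumes e: "0 < e"
  shows "\<exists>L. finite L \<and> (\<forall>x. a x \<le> R \<longrightarrow> (\<exists>y\<in>L. a (x - y) < e))"
proof -
  obtain r where r: "0 < r" "kball_seq_compact a r" using lf unfolding local_field_def by auto
  obtain p m where pm: "p \<noteq> 0" "0 < a p ^ m" "a p ^ m * R \<le> r" using scale_exists[OF r(1)] by blast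
  obtain L0 where L0: "finite L0" "\<forall>x. a x \<le> r \<longrightarrow> (\<exists>y\<in>L0. a (x - y) < e * a p ^ m)"
    using tb_r[OF r, of "e * a p ^ m"] e pm by auto
  show ?thesis
  proof (intro exI[of _ "(\<lambda>y. y / p ^ m) ` L0"] conjI allI impI)
    fix x assume x: "a x \<le> R"
    have "a p ^ m * a x \<le> a p ^ m * R" using x pm(2) by (intro mult_left_mono) auto
    then have "a (p ^ m * x) \<le> r" using pm(3) by (simp add: a_mult a_power)
    then obtain y where y: "y \<in> L0" "a (p ^ m * x - y) < e * a p ^ m" using L0 by blast
    have eq: "x - y / p ^ m = (p ^ m * x - y) / p ^ m" using pm(1) by (simp add: field_simps)
    have "a (x - y / p ^ m) = a (p ^ m * x - y) / a p ^ m" unfolding eq a_divide a_power ..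
    also have "\<dots> < e" using y(2) pos_divide_less_eq[OF pm(2), of "a (p ^ m * x - y)" e] by simp
    finally show "\<exists>y\<in>(\<lambda>y. y / p ^ m) ` L0. a (x - y) < e" using y(1) by blast
  qed (use L0(1) in simp)
qed

lemma complete_seq:
  fixes c :: "nat \<Rightarrow> 'k"
  assumes bd: "\<And>n. a (c n) \<le> R" and cau: "\<And>k j. k \<le> j \<Longrightarrow> a (c j - c k) \<le> \<rho> k"
  shows "\<exists>l. \<forall>k. a (c k - l) \<le> \<rho> k"
proof -
  obtain r where r: "0 < r" "kball_seq_compact a r" using lf unfolding local_field_def by auto
  obtain p m where pm: "p \<noteq> 0" "0 < a p ^ m" "a p ^ m * R \<le> r" using scale_exists[OF r(1)] by blast
  have "\<forall>n. a (p ^ m * c n) \<le> r"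
  proof
    fix n
    have "a p ^ m * a (c n) \<le> a p ^ m * R" using bd[of n] pm(2) by (intro mult_left_mono) auto
    then show "a (p ^ m * c n) \<le> r" using pm(3) by (simp add: a_mult a_power)
  qed
  with spec[OF r(2)[unfolded kball_seq_compact_def], of "\<lambda>n. p ^ m * c n"]
  have "\<exists>h l. strict_mono h \<and> a l \<le> r \<and> (\<lambda>n. a (p ^ m * c (h n) - l)) \<longlonglongrightarrow> 0"
    by (rule mp)
  then obtain h l0 where hl: "strict_mono h" "(\<lambda>n. a (p ^ m * c (h n) - l0)) \<longlonglongrightarrow> 0"
    by blast
  define l where "l = l0 / p ^ m"
  have eqn: "\<And>n. a (c (h n) - l) = a (p ^ m * c (h n) - l0) / a p ^ m"
  proof -
    fix n
    have "c (h n) - l = (p ^ m * c (h n) - l0) / p ^ m" using pm(1) by (simp add: l_def field_simps)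
    then show "a (c (h n) - l) = a (p ^ m * c (h n) - l0) / a p ^ m" by (simp add: a_divide a_power)
  qed
  have lim: "(\<lambda>n. a (c (h n) - l)) \<longlonglongrightarrow> 0"
  proof -
    have "(\<lambda>n. a (p ^ m * c (h n) - l0) / a p ^ m) \<longlonglongrightarrow> 0 / a p ^ m"
      by (rule tendsto_divide[OF hl(2) tendsto_const]) (use pm(2) in linarith)
    then show ?thesis unfolding eqn by simp
  qed
  show ?thesis
  proof (intro exI[of _ l] allI)
    fix k
    show "a (c k - l) \<le> \<rho> k"
    proof (rule ccontr)
      assume "\<not> ?thesis"
      then have lt: "\<rho> k < a (c k - l)" by simp
      have "0 \<le> \<rho> k" using cau[of k k] by simp
      then have "eventually (\<lambda>n. a (c (h n) - l) < a (c k - l)) sequentially"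
        using order_tendstoD(2)[OF lim, of "a (c k - l)"] lt by linarith
      then obtain N where N: "\<And>n. n \<ge> N \<Longrightarrow> a (c (h n) - l) < a (c k - l)"
        unfolding eventually_sequentially by blast
      define n where "n = max N k"
      have "k \<le> h n" using seq_suble[OF hl(1), of n] unfolding n_def by linarith
      then have "a (c k - c (h n)) \<le> \<rho> k" using cau[of k "h n"] by (simp add: a_sym)
      moreover have "a (c (h n) - l) < a (c k - l)" using N[of n] unfolding n_def by simp
      ultimately show False using a_tri[of "c k" l "c (h n)"] lt by linarith
    qed
  qed
qed

end


context nafield
begin

lemma ball_kopen: "kopen a {y. a (y - c) < r}"
  unfolding kopen_def
proof
  fix x assume x: "x \<in> {y. a (y - c) < r}"
  then have "0 < r" using a_nonneg[of "x - c"] by (metis mem_Collect_eq le_less_trans)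
  moreover have "\<forall>y. a (y - x) < r \<longrightarrow> y \<in> {y. a (y - c) < r}" using x a_tri_lt[of _ x r c] by auto
  ultimately show "\<exists>s>0. \<forall>y. a (y - x) < s \<longrightarrow> y \<in> {y. a (y - c) < r}" by blast
qed

lemma sets_kborel: "sets (kborel a) = sigma_sets UNIV {U. kopen a U}"
  unfolding kborel_def by (rule sets_measure_of) auto

lemma space_kborel[simp]: "space (kborel a) = UNIV"
  unfolding kborel_def by (rule space_measure_of) auto

lemma ball_sets: "{y. a (y - c) < r} \<in> sets (kborel a)"
  unfolding sets_kborel using ball_kopen by auto

lemma separable: "\<exists>D. countable D \<and> (\<forall>x e. 0 < e \<longrightarrow> (\<exists>d\<in>D. a (x - d) < e))"
proof -
  define L where "L = (\<lambda>(R::nat, m::nat). SOME L. finite L \<and> (\<forall>x. a x \<le> real R \<longrightarrow> (\<exists>y\<in>L. a (x - y) < 1 / (Suc m))))"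
  have L: "finite (L (R, m)) \<and> (\<forall>x. a x \<le> real R \<longrightarrow> (\<exists>y\<in>L (R, m). a (x - y) < 1 / (Suc m)))" for R m
    unfolding L_def split by (rule someI_ex) (rule net, simp)
  define D where "D = (\<Union>p. L p)"
  have "countable D" unfolding D_def by (rule countable_UN[OF countableI_type countable_finite]) (use L in auto)
  moreover have "\<exists>d\<in>D. a (x - d) < e" if "0 < e" for x e
  proof -
    obtain m where m: "1 / real (Suc m) < e" using \<open>0 < e\<close>
      by (metis nat_approx_posE of_nat_Suc)
    obtain R :: nat where R: "a x \<le> real R" using real_nat_ceiling_ge by blast
    obtain y where "y \<in> L (R, m)" "a (x - y) < 1 / Suc m" using L[of R m] R by blast
    then show ?thesis using m unfolding D_def by (intro bexI[of _ y]) auto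
  qed
  ultimately show ?thesis by blast
qed

definition dense_set :: "'k set" where
  "dense_set = (SOME D. countable D \<and> (\<forall>x e. 0 < e \<longrightarrow> (\<exists>d\<in>D. a (x - d) < e)))"

lemma dense_set: "countable dense_set" "0 < e \<Longrightarrow> \<exists>d\<in>dense_set. a (x - d) < e"
  using someI_ex[OF separable] unfolding dense_set_def by blast+

lemma kopen_Union:
  assumes "kopen a U"
  shows "U = (\<Union>(d, m)\<in>{(d, m). d \<in> dense_set \<and> {y. a (y - d) < 1 / Suc m} \<subseteq> U}. {y. a (y - d) < 1 / Suc m})"
proof (intro equalityI subsetI)
  fix x assume "x \<in> U"
  then obtain r where r: "r > 0" "\<And>y. a (y - x) < r \<Longrightarrow> y \<in> U" using assms unfolding kopen_def by blast
  obtain m where m: "1 / real (Suc m) < r" using r(1) by (metis nat_approx_posE of_nat_Suc)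
  obtain d where d: "d \<in> dense_set" "a (x - d) < 1 / Suc m" using dense_set(2)[of "1 / Suc m" x] by auto
  have "{y. a (y - d) < 1 / Suc m} \<subseteq> U"
  proof
    fix y assume "y \<in> {y. a (y - d) < 1 / Suc m}"
    then have "a (y - x) < 1 / Suc m" using d(2) a_tri_lt[of y d "1 / Suc m" x] by (simp add: a_sym)
    then show "y \<in> U" using r m by auto
  qed
  then show "x \<in> (\<Union>(d, m)\<in>{(d, m). d \<in> dense_set \<and> {y. a (y - d) < 1 / Suc m} \<subseteq> U}. {y. a (y - d) < 1 / Suc m})"
    using d by blast
qed auto

lemma measurable_kborelI:
  assumes "\<And>c r. {w \<in> space N. a (f w - c) < r} \<in> sets N"
  shows "f \<in> measurable N (kborel a)"
  unfolding kborel_def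
proof (rule measurable_measure_of)
  fix U assume "U \<in> {U. kopen a U}"
  then have U: "kopen a U" by simp
  let ?I = "{(d, m). d \<in> dense_set \<and> {y. a (y - d) < 1 / Suc m} \<subseteq> U}"
  have "countable ?I"
    by (rule countable_subset[of _ "dense_set \<times> UNIV"]) (auto intro: dense_set(1))
  have "f -` U \<inter> space N = (\<Union>(d, m)\<in>?I. {w \<in> space N. a (f w - d) < 1 / Suc m})"
    by (subst kopen_Union[OF U]) auto
  also have "\<dots> \<in> sets N"
    using \<open>countable ?I\<close> assms by (intro sets.countable_UN') auto
  finally show "f -` U \<inter> space N \<in> sets N" .
qed auto

lemma measurable_kborel_ball:
  assumes "f \<in> measurable N (kborel a)"
  shows "{w \<in> space N. a (f w - c) < r} \<in> sets N"
proof -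
  have "f -` {y. a (y - c) < r} \<inter> space N \<in> sets N"
    using measurable_sets[OF assms ball_sets] .
  moreover have "f -` {y. a (y - c) < r} \<inter> space N = {w \<in> space N. a (f w - c) < r}" by auto
  ultimately show ?thesis by simp
qed

lemma measurable_kborel_iff:
  "f \<in> measurable N (kborel a) \<longleftrightarrow> (\<forall>c r. {w \<in> space N. a (f w - c) < r} \<in> sets N)"
  using measurable_kborelI measurable_kborel_ball by blast

lemma borel_measurable_adiff:
  assumes f: "f \<in> measurable N (kborel a)" and g: "g \<in> measurable N (kborel a)"
  shows "(\<lambda>w. a (f w - g w)) \<in> borel_measurable N"
  unfolding borel_measurable_iff_less
proof
  fix t :: real
  show "{w \<in> space N. a (f w - g w) < t} \<in> sets N"
  proof (cases "t \<le> 0")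
    case True
    then have "{w \<in> space N. a (f w - g w) < t} = {}" using a_nonneg by (auto simp: not_less intro: order_trans)
    then show ?thesis using sets.empty_sets by metis
  next
    case False
    have "{w \<in> space N. a (f w - g w) < t} = (\<Union>d\<in>dense_set. {w \<in> space N. a (f w - d) < t} \<inter> {w \<in> space N. a (g w - d) < t})"
    proof (intro equalityI subsetI)
      fix w assume w: "w \<in> {w \<in> space N. a (f w - g w) < t}"
      obtain d where d: "d \<in> dense_set" "a (f w - d) < t" using dense_set(2)[of t "f w"] False by auto
      have "a (g w - d) < t" using a_tri_lt[of "g w" "f w" t d] w d by (simp add: a_sym)
      then show "w \<in> (\<Union>d\<in>dense_set. {w \<in> space N. a (f w - d) < t} \<inter> {w \<in> space N. a (g w - d) < t})"
        using w d by blast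
    next
      fix w assume "w \<in> (\<Union>d\<in>dense_set. {w \<in> space N. a (f w - d) < t} \<inter> {w \<in> space N. a (g w - d) < t})"
      then obtain d where "w \<in> space N" "a (f w - d) < t" "a (g w - d) < t" by blast
      then show "w \<in> {w \<in> space N. a (f w - g w) < t}" using a_tri_lt[of "f w" d t "g w"] by (simp add: a_sym)
    qed
    also have "\<dots> \<in> sets N"
      using dense_set(1) measurable_kborel_ball[OF f] measurable_kborel_ball[OF g]
      by (intro sets.countable_UN') auto
    finally show ?thesis .
  qed
qed

lemma borel_measurable_a:
  assumes f: "f \<in> measurable N (kborel a)"
  shows "(\<lambda>w. a (f w)) \<in> borel_measurable N"
  using borel_measurable_adiff[OF f measurable_const[of 0]] by simp

end


context nafield
begin

definition rr :: "nat \<Rightarrow> real" where "rr k = 1 / real (Suc k)"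

lemma rr_pos: "0 < rr k" unfolding rr_def by simp
lemma rr_le1: "rr k \<le> 1" unfolding rr_def by simp
lemma rr_mono: "k \<le> j \<Longrightarrow> rr j \<le> rr k" unfolding rr_def by (simp add: frac_le)
lemma rr_small: "0 < e \<Longrightarrow> \<exists>k. rr k < e" unfolding rr_def by (metis nat_approx_posE of_nat_Suc)

primrec sel_idx :: "(nat \<Rightarrow> 'k list) \<Rightarrow> (nat \<Rightarrow> 'b \<Rightarrow> 'k) \<Rightarrow> nat \<Rightarrow> 'b \<Rightarrow> nat" where
  "sel_idx NL W 0 w = (LEAST i. i < length (NL 0) \<and> infinite {n. a (W n w - NL 0 ! i) < rr 0})"
| "sel_idx NL W (Suc k) w = (LEAST i. i < length (NL (Suc k)) \<and>
      a (NL (Suc k) ! i - NL k ! sel_idx NL W k w) < rr k \<and>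
      infinite {n. a (W n w - NL (Suc k) ! i) < rr (Suc k)})"

lemma pigeon:
  fixes len :: nat
  assumes "infinite S" "\<And>n. n \<in> S \<Longrightarrow> \<exists>i<len. Q i n"
  shows "\<exists>i<len. infinite {n\<in>S. Q i n}"
proof (rule ccontr)
  assume "\<not> ?thesis"
  then have "finite (\<Union>i<len. {n\<in>S. Q i n})" by (subst finite_UN) auto
  moreover have "S \<subseteq> (\<Union>i<len. {n\<in>S. Q i n})" using assms(2) by blast
  ultimately show False using assms(1) finite_subset by blast
qed

lemma pred_constant: "Measurable.pred N (\<lambda>w. c)"
  by (rule measurable_const) simp

lemma pred_inf:
  assumes "\<And>n. Measurable.pred N (P n)"
  shows "Measurable.pred N (\<lambda>w. infinite {n::nat. P n w})"
proof -
  have "Measurable.pred N (\<lambda>w. \<forall>m. \<exists>n. m \<le> n \<and> P n w)"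
    apply (rule pred_intros_countable(1))
    apply (rule pred_intros_countable(2))
    apply (rule pred_intros_logic(3))
     apply (rule pred_constant)
    apply (rule assms)
    done
  moreover have "infinite {n. P n w} \<longleftrightarrow> (\<forall>m. \<exists>n. m \<le> n \<and> P n w)" for w
    unfolding infinite_nat_iff_unbounded_le by blast
  ultimately show ?thesis by presburger
qed

lemma cluster_select:
  fixes W :: "nat \<Rightarrow> 'b \<Rightarrow> 'k"
  assumes meas: "\<And>n. W n \<in> measurable N (kborel a)" and bd: "\<And>n w. a (W n w) \<le> C"
  shows "\<exists>Y. Y \<in> measurable N (kborel a) \<and> (\<forall>w. a (Y w) \<le> C) \<and>
             (\<forall>w e j. 0 < e \<longrightarrow> (\<exists>n\<ge>j. a (W n w - Y w) < e))"
proof -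
  have "\<forall>k. \<exists>xs. \<forall>x. a x \<le> C \<longrightarrow> (\<exists>y\<in>set xs. a (x - y) < rr k)"
  proof
    fix k
    obtain L where L: "finite L" "\<forall>x. a x \<le> C \<longrightarrow> (\<exists>y\<in>L. a (x - y) < rr k)" using net[OF rr_pos] by blast
    obtain xs where "set xs = L" using finite_list[OF L(1)] by blast
    then show "\<exists>xs. \<forall>x. a x \<le> C \<longrightarrow> (\<exists>y\<in>set xs. a (x - y) < rr k)" using L(2) by blast
  qed
  from choice[OF this] obtain NL where NL0: "\<And>k x. a x \<le> C \<Longrightarrow> \<exists>y\<in>set (NL k). a (x - y) < rr k" by blast
  have NL: "\<exists>i<length (NL k). a (x - NL k ! i) < rr k" if xC: "a x \<le> C" for k x
  proof -
    obtain y where "y \<in> set (NL k)" "a (x - y) < rr k" using NL0[OF xC, of k] by blast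
    then show ?thesis by (auto simp: in_set_conv_nth)
  qed
  define idx where "idx = sel_idx NL W"
  define cen where "cen k w = NL k ! idx k w" for k w
  have inv: "idx k w < length (NL k) \<and> infinite {n. a (W n w - cen k w) < rr k} \<and>
     (\<forall>k'. k = Suc k' \<longrightarrow> a (cen k w - cen k' w) < rr k')" for k w
  proof (induction k)
    case 0
    have "\<exists>i<length (NL 0). infinite {n\<in>UNIV. a (W n w - NL 0 ! i) < rr 0}"
      by (rule pigeon) (use NL bd in auto)
    then have "\<exists>i. i < length (NL 0) \<and> infinite {n. a (W n w - NL 0 ! i) < rr 0}" by auto
    from LeastI_ex[OF this] show ?case unfolding cen_def idx_def by simp
  next
    case (Suc k)
    let ?S = "{n. a (W n w - cen k w) < rr k}"
    have "\<exists>i<length (NL (Suc k)). infinite {n\<in>?S. a (W n w - NL (Suc k) ! i) < rr (Suc k)}"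
      by (rule pigeon) (use NL bd Suc.IH in auto)
    then obtain i where i: "i < length (NL (Suc k))" "infinite {n\<in>?S. a (W n w - NL (Suc k) ! i) < rr (Suc k)}"
      by blast
    then obtain n where n: "a (W n w - cen k w) < rr k" "a (W n w - NL (Suc k) ! i) < rr (Suc k)"
      using not_finite_existsD by blast
    have "a (NL (Suc k) ! i - cen k w) < rr k"
      using a_tri_lt[of "NL (Suc k) ! i" "W n w" "rr k" "cen k w"] n rr_mono[of k "Suc k"] by (simp add: a_sym)
    moreover have "infinite {n. a (W n w - NL (Suc k) ! i) < rr (Suc k)}"
      using i(2) by (rule contrapos_nn) (auto elim: finite_subset)
    ultimately have "\<exists>i. i < length (NL (Suc k)) \<and> a (NL (Suc k) ! i - NL k ! idx k w) < rr k \<and>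
      infinite {n. a (W n w - NL (Suc k) ! i) < rr (Suc k)}" using i(1) unfolding cen_def by blast
    from LeastI_ex[OF this] show ?case unfolding cen_def idx_def by simp
  qed
  have cau: "a (cen j w - cen k w) < rr k" if "k \<le> j" for j k w
    using that
  proof (induction j rule: dec_induct)
    case base then show ?case using rr_pos by simp
  next
    case (step j)
    have "a (cen (Suc j) w - cen j w) < rr k" using inv[of "Suc j" w] rr_mono[OF step(1)] by simp
    then show ?case using a_tri_lt[OF _ step(3)] by blast
  qed
  have cbd: "a (cen k w) \<le> max C 1" for k w
  proof -
    obtain n where "a (W n w - cen k w) < rr k" using inv[of k w] not_finite_existsD by blast
    then have "a (W n w - cen k w) \<le> 1" using rr_le1[of k] by simp
    then show ?thesis using a_ultra[of "W n w" "- (W n w - cen k w)"] bd[of n w] a_sym[of "W n w" "cen k w"] by simp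
  qed
  define Y where "Y w = (SOME l. \<forall>k. a (cen k w - l) \<le> rr k)" for w
  have Y: "a (cen k w - Y w) \<le> rr k" for k w
  proof -
    have c1: "\<And>n. a (cen n w) \<le> max C 1" using cbd by simp
    have c2: "\<And>k j. k \<le> j \<Longrightarrow> a (cen j w - cen k w) \<le> rr k" using cau less_imp_le by blast
    have "\<exists>l. \<forall>k. a (cen k w - l) \<le> rr k" using complete_seq[OF c1 c2] .
    from someI_ex[OF this] show ?thesis unfolding Y_def by blast
  qed
  have clus: "\<exists>n\<ge>j. a (W n w - Y w) < e" if e: "0 < e" for w e j
  proof -
    obtain k where k: "rr k < e" using rr_small[OF e] by blast
    obtain n where n: "n \<ge> j" "a (W n w - cen k w) < rr k"
      using inv[of k w] unfolding infinite_nat_iff_unbounded_le by blast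
    have "a (W n w - Y w) \<le> rr k" using a_tri_le[of "W n w" "cen k w" "rr k" "Y w"] n(2) Y[of k w] by simp
    then show ?thesis using n k by (intro exI[of _ n]) auto
  qed
  have Ybd: "a (Y w) \<le> C" for w
  proof (rule ccontr)
    assume "\<not> ?thesis"
    then have lt: "C < a (Y w)" by simp
    then have "0 < a (Y w)" using bd[of 0 w] a_nonneg[of "W 0 w"] by linarith
    then obtain n where "a (W n w - Y w) < a (Y w)" using clus by blast
    then show False using a_ultra[of "W n w" "- (W n w - Y w)"] bd[of n w] lt a_sym[of "W n w" "Y w"] by simp
  qed
  have idx_meas: "idx k \<in> measurable N (count_space UNIV)" for k
  proof (induction k)
    case 0
    have "(\<lambda>w. LEAST i. i < length (NL 0) \<and> infinite {n. a (W n w - NL 0 ! i) < rr 0}) \<in> measurable N (count_space UNIV)"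
    proof (rule measurable_Least)
      fix i
      have "Measurable.pred N (\<lambda>w. a (W n w - NL 0 ! i) < rr 0)" for n
        unfolding pred_def using measurable_kborel_ball[OF meas] .
      then show "Measurable.pred N (\<lambda>w. i < length (NL 0) \<and> infinite {n. a (W n w - NL 0 ! i) < rr 0})"
        by (intro pred_intros_logic(3) pred_constant pred_inf)
    qed
    moreover have "idx 0 = (\<lambda>w. LEAST i. i < length (NL 0) \<and> infinite {n. a (W n w - NL 0 ! i) < rr 0})"
      by (rule ext) (simp only: idx_def sel_idx.simps)
    ultimately show ?case by (simp only:)
  next
    case (Suc k)
    have "(\<lambda>w. LEAST i. i < length (NL (Suc k)) \<and>
      a (NL (Suc k) ! i - NL k ! idx k w) < rr k \<and>
      infinite {n. a (W n w - NL (Suc k) ! i) < rr (Suc k)}) \<in> measurable N (count_space UNIV)"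
    proof (rule measurable_Least)
      fix i
      have p1: "Measurable.pred N (\<lambda>w. a (W n w - NL (Suc k) ! i) < rr (Suc k))" for n
        unfolding pred_def using measurable_kborel_ball[OF meas] .
      have p2: "Measurable.pred N (\<lambda>w. a (NL (Suc k) ! i - NL k ! idx k w) < rr k)"
        using measurable_compose[OF Suc.IH measurable_count_space[of "\<lambda>j. a (NL (Suc k) ! i - NL k ! j) < rr k" UNIV]] .
      show "Measurable.pred N (\<lambda>w. i < length (NL (Suc k)) \<and> a (NL (Suc k) ! i - NL k ! idx k w) < rr k \<and>
         infinite {n. a (W n w - NL (Suc k) ! i) < rr (Suc k)})"
        by (intro pred_intros_logic(3) pred_constant pred_inf p1 p2)
    qed
    moreover have "idx (Suc k) = (\<lambda>w. LEAST i. i < length (NL (Suc k)) \<and>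
      a (NL (Suc k) ! i - NL k ! idx k w) < rr k \<and>
      infinite {n. a (W n w - NL (Suc k) ! i) < rr (Suc k)})"
      by (rule ext) (simp only: idx_def sel_idx.simps)
    ultimately show ?case by (simp only:)
  qed
  have cen_ball: "{w \<in> space N. a (cen k w - c) < r} \<in> sets N" for k c r
  proof -
    have "Measurable.pred N (\<lambda>w. a (cen k w - c) < r)"
      unfolding cen_def
      using measurable_compose[OF idx_meas measurable_count_space[of "\<lambda>j. a (NL k ! j - c) < r" UNIV]] .
    then show ?thesis unfolding pred_def .
  qed
  have Ymeas: "Y \<in> measurable N (kborel a)"
  proof (rule measurable_kborelI)
    fix c r
    have "{w \<in> space N. a (Y w - c) < r} = (\<Union>k\<in>{k. rr k < r}. {w \<in> space N. a (cen k w - c) < r})"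
    proof (intro equalityI subsetI)
      fix w assume w: "w \<in> {w \<in> space N. a (Y w - c) < r}"
      then have "0 < r" using a_nonneg[of "Y w - c"] by (metis mem_Collect_eq le_less_trans)
      then obtain k where k: "rr k < r" using rr_small by blast
      have "a (cen k w - c) < r" using a_tri[of "cen k w" c "Y w"] Y[of k w] k w by (simp add: max_def split: if_splits)
      then show "w \<in> (\<Union>k\<in>{k. rr k < r}. {w \<in> space N. a (cen k w - c) < r})" using k w by blast
    next
      fix w assume "w \<in> (\<Union>k\<in>{k. rr k < r}. {w \<in> space N. a (cen k w - c) < r})"
      then obtain k where k: "rr k < r" "w \<in> space N" "a (cen k w - c) < r" by blast
      have "a (Y w - c) < r" using a_tri[of "Y w" c "cen k w"] Y[of k w] k by (simp add: a_sym)
      then show "w \<in> {w \<in> space N. a (Y w - c) < r}" using k by blast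
    qed
    also have "\<dots> \<in> sets N" using cen_ball by (intro sets.countable_UN') auto
    finally show "{w \<in> space N. a (Y w - c) < r} \<in> sets N" .
  qed
  show ?thesis using Ymeas Ybd clus by blast
qed

end


lemma pow_root: "0 \<le> x \<Longrightarrow> 1 \<le> p \<Longrightarrow> (x ^ p) powr (1 / real p) = (x::real)"
proof (cases "x = 0")
  case False
  assume "0 \<le> x" "1 \<le> p"
  then have x: "0 < x" using False by simp
  have "(x ^ p) powr (1 / real p) = (x powr real p) powr (1 / real p)" using powr_realpow[OF x] by simp
  also have "\<dots> = x" using \<open>1 \<le> p\<close> x by (simp add: powr_powr)
  finally show ?thesis .
qed simp

lemma root_pow: "0 \<le> x \<Longrightarrow> 1 \<le> p \<Longrightarrow> (x powr (1 / real p)) ^ p = (x::real)"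
proof (cases "x = 0")
  case False
  assume "0 \<le> x" "1 \<le> p"
  then have x: "0 < x" using False by simp
  have "(x powr (1 / real p)) ^ p = (x powr (1 / real p)) powr real p"
    using powr_realpow[of "x powr (1 / real p)" p] x by simp
  also have "\<dots> = x" using \<open>1 \<le> p\<close> x by (simp add: powr_powr)
  finally show ?thesis .
qed simp

locale ksetting =
  fixes M G :: "'w measure"
  assumes P: "prob_space M" and sub: "subalgebra M G"
begin

sublocale prob_space M by (rule P)
sublocale sfs: sigma_finite_subalgebra M G
  using finite_measure_subalgebra_is_sigma_finite[of M G] sub
  by (simp add: finite_measure_axioms finite_measure_subalgebra.intro finite_measure_subalgebra_axioms_def)

definition bnd :: "('w \<Rightarrow> real) \<Rightarrow> real \<Rightarrow> bool" where
  "bnd S B \<longleftrightarrow> S \<in> borel_measurable M \<and> (AE w in M. 0 \<le> S w \<and> S w \<le> B)"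

lemma bnd_int:
  assumes S: "bnd S B"
  shows "integrable M (\<lambda>w. S w ^ p)"
proof -
  have m: "S \<in> borel_measurable M" and ae: "AE w in M. 0 \<le> S w \<and> S w \<le> B"
    using S unfolding bnd_def by auto
  have ae': "AE w in M. norm (S w ^ p) \<le> B ^ p"
    using ae by eventually_elim (simp add: power_mono)
  show ?thesis by (rule integrable_const_bound[OF ae']) (use m in measurable)
qed

lemma rce_nonneg:
  assumes S: "bnd S B"
  shows "AE w in M. \<forall>p. 0 \<le> real_cond_exp M G (\<lambda>v. S v ^ p) w"
proof -
  have m: "S \<in> borel_measurable M" and ae: "AE w in M. 0 \<le> S w \<and> S w \<le> B"
    using S unfolding bnd_def by auto
  have "AE w in M. 0 \<le> real_cond_exp M G (\<lambda>v. S v ^ p) w" for p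
  proof (rule sfs.real_cond_exp_pos)
    show "AE w in M. 0 \<le> S w ^ p" using ae by eventually_elim simp
    show "(\<lambda>w. S w ^ p) \<in> borel_measurable M" using m by measurable
  qed
  then show ?thesis unfolding AE_all_countable by blast
qed

lemma ce_nonneg: "0 \<le> cond_esssup M G S w"
  unfolding cond_esssup_def
  by (rule order_trans[OF _ SUP_upper[of 1]]) auto

lemma ce_meas: "cond_esssup M G S \<in> borel_measurable G"
  unfolding cond_esssup_def by measurable

lemma ce_mono:
  assumes S: "bnd S B" and T: "bnd T B" and le: "AE w in M. S w \<le> T w"
  shows "AE w in M. cond_esssup M G S w \<le> cond_esssup M G T w"
proof -
  have "AE w in M. \<forall>p. real_cond_exp M G (\<lambda>v. S v ^ p) w \<le> real_cond_exp M G (\<lambda>v. T v ^ p) w"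
    unfolding AE_all_countable
  proof
    fix p
    show "AE w in M. real_cond_exp M G (\<lambda>v. S v ^ p) w \<le> real_cond_exp M G (\<lambda>v. T v ^ p) w"
    proof (rule sfs.real_cond_exp_mono[OF _ bnd_int[OF S] bnd_int[OF T]])
      have "AE w in M. 0 \<le> S w \<and> S w \<le> B" using S unfolding bnd_def by auto
      with le show "AE w in M. S w ^ p \<le> T w ^ p" by eventually_elim (simp add: power_mono)
    qed
  qed
  with rce_nonneg[OF S] show ?thesis
    unfolding cond_esssup_def
  proof eventually_elim
    case (elim w)
    show ?case by (rule SUP_mono') (simp add: powr_mono2 elim)
  qed
qed

lemma ce_fix:
  assumes U: "U \<in> borel_measurable G" "AE w in M. 0 \<le> U w \<and> U w \<le> B"
  shows "AE w in M. cond_esssup M G U w = ereal (U w)"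
proof -
  have UM: "U \<in> borel_measurable M" using measurable_from_subalg[OF sub U(1)] .
  have b: "bnd U B" unfolding bnd_def using UM U(2) by simp
  have "AE w in M. \<forall>p. real_cond_exp M G (\<lambda>v. U v ^ p) w = U w ^ p"
    unfolding AE_all_countable
    using U(1) by (auto intro!: sfs.real_cond_exp_F_meas bnd_int[OF b])
  with U(2) show ?thesis
    unfolding cond_esssup_def
  proof (eventually_elim)
    case (elim w)
    have "(SUP p\<in>{1::nat..}. ereal (real_cond_exp M G (\<lambda>v. U v ^ p) w powr (1 / real p)))
        = (SUP p\<in>{1::nat..}. ereal (U w))"
      using elim by (intro SUP_cong refl) (simp add: pow_root)
    also have "\<dots> = ereal (U w)" by (rule SUP_const) auto
    finally show ?case .
  qed
qed

end


context ksetting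
begin

lemma pow_bound_measure:
  fixes q d mu :: real
  assumes q: "0 \<le> q" and d: "0 < d" and mu: "0 \<le> mu"
    and h: "\<And>p::nat. 1 \<le> p \<Longrightarrow> (q + d) ^ p * mu \<le> q ^ p"
  shows "mu = 0"
proof (rule ccontr)
  assume "mu \<noteq> 0"
  then have mu': "0 < mu" using mu by simp
  have qd: "0 < q + d" using q d by simp
  have lt1: "q / (q + d) < 1" using q d by simp
  obtain p where p: "(q / (q + d)) ^ p < mu" using real_arch_pow_inv[OF mu' lt1] by blast
  have "(q / (q + d)) ^ Suc p \<le> (q / (q + d)) ^ p"
    using q qd lt1 by (intro power_decreasing) auto
  then have "(q / (q + d)) ^ Suc p < mu" using p by simp
  then have "q ^ Suc p / (q + d) ^ Suc p < mu" by (simp only: power_divide)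
  moreover have "0 < (q + d) ^ Suc p" using qd by simp
  ultimately have "q ^ Suc p < mu * (q + d) ^ Suc p" by (simp add: pos_divide_less_eq)
  moreover have "(q + d) ^ Suc p * mu \<le> q ^ Suc p" using h[of "Suc p"] by simp
  ultimately show False by (simp add: mult.commute)
qed

lemma ce_upper:
  assumes S: "bnd S B"
  shows "AE w in M. ereal (S w) \<le> cond_esssup M G S w"
proof -
  let ?V = "cond_esssup M G S"
  have SM[measurable]: "S \<in> borel_measurable M" using S unfolding bnd_def by simp
  have VG[measurable]: "?V \<in> borel_measurable G" by (rule ce_meas)
  have VM[measurable]: "?V \<in> borel_measurable M" using measurable_from_subalg[OF sub VG] .
  have Sbd: "AE w in M. 0 \<le> S w \<and> S w \<le> B" using S unfolding bnd_def by simp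
  have key: "{w \<in> space M. ?V w \<le> ereal q \<and> q + d \<le> S w} \<in> null_sets M" if d: "0 < d" for q d
  proof -
    define E where "E = {w \<in> space M. ?V w \<le> ereal q \<and> q + d \<le> S w}"
    have E1: "{w \<in> space M. ?V w \<le> ereal q} \<in> sets M"
      by (rule borel_measurable_le[OF VM]) simp
    have E2: "{w \<in> space M. q + d \<le> S w} \<in> sets M"
      by (rule borel_measurable_le[OF _ SM]) simp
    have "E = {w \<in> space M. ?V w \<le> ereal q} \<inter> {w \<in> space M. q + d \<le> S w}"
      unfolding E_def by blast
    then have E: "E \<in> sets M" using E1 E2 by simp
    show ?thesis
    proof (cases "q < 0")
      case True
      have "ereal q < ?V w" for w
      proof -
        have "ereal q < 0" using True by simp
        then show ?thesis using ce_nonneg[of S w] by (rule less_le_trans)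
      qed
      then have "E = {}" unfolding E_def by (simp add: not_le)
      then have "E \<in> null_sets M" by simp
      then show ?thesis unfolding E_def .
    next
      case False
      then have q: "0 \<le> q" by simp
      define A where "A = {w \<in> space M. ?V w \<le> ereal q}"
      have AG: "A \<in> sets G" unfolding A_def
      proof -
        have "{w \<in> space G. ?V w \<le> ereal q} \<in> sets G" by (rule borel_measurable_le[OF VG]) simp
        moreover have "space G = space M" using sub unfolding subalgebra_def by simp
        ultimately show "{w \<in> space M. ?V w \<le> ereal q} \<in> sets G" by simp
      qed
      have AM: "A \<in> sets M" using AG sub unfolding subalgebra_def by blast
      have EA: "E \<subseteq> A" unfolding E_def A_def by auto
      have ineq: "(q + d) ^ p * measure M E \<le> q ^ p" if p: "1 \<le> p" for p :: nat
      proof -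
        have mAG: "indicator A \<in> borel_measurable G" using AG by simp
        have mA: "indicator A \<in> borel_measurable M" using AM by simp
        have mSp: "(\<lambda>w. S w ^ p) \<in> borel_measurable M" using SM by measurable
        have aeS: "AE w in M. norm (indicator A w * S w ^ p) \<le> B ^ p"
          using Sbd
        proof eventually_elim
          case (elim w)
          then have "0 \<le> B" by linarith
          then show ?case using elim by (simp add: indicator_def power_mono)
        qed
        have intS: "integrable M (\<lambda>w. indicator A w * S w ^ p)"
          by (rule integrable_const_bound[OF aeS]) (rule borel_measurable_times[OF mA mSp])
        have h1: "(\<integral>w. indicator A w * real_cond_exp M G (\<lambda>v. S v ^ p) w \<partial>M) = (\<integral>w. indicator A w * S w ^ p \<partial>M)"
          by (rule sfs.real_cond_exp_intg(2)[OF intS mAG mSp])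
        have intR: "integrable M (\<lambda>w. indicator A w * real_cond_exp M G (\<lambda>v. S v ^ p) w)"
          by (rule sfs.real_cond_exp_intg(1)[OF intS mAG mSp])
        have intQ: "integrable M (\<lambda>w. indicator A w * q ^ p)"
          by (intro integrable_const_bound[where B="q ^ p"] borel_measurable_times[OF mA] borel_measurable_const)
             (use q in \<open>auto split: split_indicator\<close>)
        have h2: "AE w in M. indicator A w * real_cond_exp M G (\<lambda>v. S v ^ p) w \<le> indicator A w * q ^ p"
          using rce_nonneg[OF S]
        proof eventually_elim
          case (elim w)
          show ?case
          proof (cases "w \<in> A")
            case True
            then have Vq: "?V w \<le> ereal q" unfolding A_def by simp
            have "ereal (real_cond_exp M G (\<lambda>v. S v ^ p) w powr (1 / real p)) \<le> ?V w"
              unfolding cond_esssup_def by (rule SUP_upper) (use p in simp)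
            then have "ereal (real_cond_exp M G (\<lambda>v. S v ^ p) w powr (1 / real p)) \<le> ereal q"
              using Vq by (rule order_trans)
            then have r: "real_cond_exp M G (\<lambda>v. S v ^ p) w powr (1 / real p) \<le> q" by simp
            have "real_cond_exp M G (\<lambda>v. S v ^ p) w = (real_cond_exp M G (\<lambda>v. S v ^ p) w powr (1 / real p)) ^ p"
              using root_pow[OF elim[rule_format, of p] p] by simp
            also have "\<dots> \<le> q ^ p" by (rule power_mono[OF r]) simp
            finally show ?thesis using True by simp
          qed simp
        qed
        have h3: "(\<integral>w. indicator A w * q ^ p \<partial>M) \<le> q ^ p"
        proof -
          have "(\<integral>w. indicator A w * q ^ p \<partial>M) = measure M A * q ^ p"
            using AM by simp
          also have "\<dots> \<le> 1 * q ^ p" using q by (intro mult_right_mono) auto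
          finally show ?thesis by simp
        qed
        have intE: "integrable M (\<lambda>w. indicator E w * (q + d) ^ p)"
          by (intro integrable_const_bound[where B="(q + d) ^ p"] borel_measurable_times borel_measurable_const)
             (use q d E in \<open>auto split: split_indicator\<close>)
        have h4: "(\<integral>w. indicator E w * (q + d) ^ p \<partial>M) \<le> (\<integral>w. indicator A w * S w ^ p \<partial>M)"
        proof (rule integral_mono_AE[OF intE intS])
          show "AE w in M. indicator E w * (q + d) ^ p \<le> indicator A w * S w ^ p"
            using Sbd
          proof eventually_elim
            case (elim w)
            show ?case
            proof (cases "w \<in> E")
              case True
              then have "q + d \<le> S w" "w \<in> A" using EA unfolding E_def by auto
              then show ?thesis using True q d by (simp add: power_mono)
            next
              case False
              then show ?thesis using elim by (simp split: split_indicator)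
            qed
          qed
        qed
        have h5: "(\<integral>w. indicator E w * (q + d) ^ p \<partial>M) = measure M E * (q + d) ^ p"
          using E by simp
        have "measure M E * (q + d) ^ p \<le> q ^ p"
          using h1 h2 h3 h4 h5 integral_mono_AE[OF intR intQ h2] by linarith
        then show ?thesis by (simp add: mult.commute)
      qed
      have "measure M E = 0" by (rule pow_bound_measure[OF q d measure_nonneg ineq])
      then show ?thesis using E unfolding E_def by (simp add: emeasure_eq_measure null_sets_def)
    qed
  qed
  have "AE w in M. \<forall>q\<in>\<rat>. \<forall>m::nat. \<not> (?V w \<le> ereal q \<and> q + 1 / Suc m \<le> S w)"
    unfolding AE_ball_countable[OF countable_rat] AE_all_countable
  proof (intro ballI allI)
    fix q :: real and m :: nat
    show "AE w in M. \<not> (?V w \<le> ereal q \<and> q + 1 / Suc m \<le> S w)"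
      by (rule AE_I'[OF key[of "1 / Suc m" q]]) auto
  qed
  then show ?thesis
  proof eventually_elim
    case (elim w)
    show ?case
    proof (rule ccontr)
      assume "\<not> ereal (S w) \<le> ?V w"
      then have lt: "?V w < ereal (S w)" by simp
      have "?V w \<noteq> \<infinity>" using lt by auto
      moreover have "?V w \<noteq> -\<infinity>" using ce_nonneg[of S w] by auto
      ultimately obtain v where v: "?V w = ereal v" by (cases "?V w") auto
      then have "v < S w" using lt by simp
      then obtain q where q: "q \<in> \<rat>" "v < q" "q < S w" using Rats_dense_in_real by blast
      have "0 < S w - q" using q(3) by simp
      then obtain m where m: "1 / real (Suc m) < S w - q"
        by (metis nat_approx_posE of_nat_Suc)
      have "?V w \<le> ereal q" using v q by simp
      moreover have "q + 1 / Suc m \<le> S w" using m by simp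
      ultimately show False using elim q(1) by blast
    qed
  qed
qed

end


locale kprob = nafield a + ksetting M G
  for a :: "'k::field \<Rightarrow> real" and M G :: "'w measure"
begin

lemma space_G: "space G = space M" using sub unfolding subalgebra_def by simp

lemma measG_M: "f \<in> measurable G N \<Longrightarrow> f \<in> measurable M N"
  by (rule measurable_from_subalg[OF sub])

lemma bnd_mono: "bnd S C \<Longrightarrow> C \<le> K \<Longrightarrow> bnd S K"
  unfolding bnd_def by (auto elim!: AE_mp)

lemma bnd_const: "0 \<le> K \<Longrightarrow> bnd (\<lambda>_. K) K"
  unfolding bnd_def by auto

lemma ce_props:
  assumes S: "bnd S K"
  shows "AE w in M. cond_esssup M G S w = ereal (real_of_ereal (cond_esssup M G S w))
            \<and> 0 \<le> real_of_ereal (cond_esssup M G S w) \<and> real_of_ereal (cond_esssup M G S w) \<le> K"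
proof -
  have Sb: "AE w in M. 0 \<le> S w \<and> S w \<le> K" using S unfolding bnd_def by simp
  have K: "0 \<le> K"
  proof -
    have "AE w in M. 0 \<le> K" using Sb by eventually_elim simp
    then show ?thesis by simp
  qed
  have m: "AE w in M. cond_esssup M G S w \<le> cond_esssup M G (\<lambda>_. K) w"
    by (rule ce_mono[OF S bnd_const[OF K]]) (use Sb in \<open>eventually_elim, simp\<close>)
  have f: "AE w in M. cond_esssup M G (\<lambda>_. K) w = ereal K"
    by (rule ce_fix) (use K in auto)
  from m f show ?thesis
  proof eventually_elim
    case (elim w)
    then have le: "cond_esssup M G S w \<le> ereal K" by simp
    have ge: "0 \<le> cond_esssup M G S w" by (rule ce_nonneg)
    obtain v where v: "cond_esssup M G S w = ereal v" using le ge by (cases "cond_esssup M G S w") auto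
    then show ?case using le ge by simp
  qed
qed

lemma ce_dom:
  assumes S: "bnd S K" and U: "U \<in> borel_measurable G" "AE w in M. 0 \<le> U w \<and> U w \<le> K"
    and le: "AE w in M. S w \<le> U w"
  shows "AE w in M. real_of_ereal (cond_esssup M G S w) \<le> U w"
proof -
  have UM: "U \<in> borel_measurable M" using measG_M[OF U(1)] .
  have bU: "bnd U K" unfolding bnd_def using UM U(2) by simp
  have "AE w in M. cond_esssup M G S w \<le> cond_esssup M G U w" by (rule ce_mono[OF S bU le])
  moreover have "AE w in M. cond_esssup M G U w = ereal (U w)" by (rule ce_fix[OF U])
  moreover note ce_props[OF S]
  ultimately show ?thesis
  proof eventually_elim
    case (elim w)
    then have "ereal (real_of_ereal (cond_esssup M G S w)) \<le> ereal (U w)" by simp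
    then show ?case by simp
  qed
qed

lemma ce_upper_real:
  assumes S: "bnd S K"
  shows "AE w in M. S w \<le> real_of_ereal (cond_esssup M G S w)"
  using ce_upper[OF S] ce_props[OF S]
proof eventually_elim
  case (elim w)
  then have "ereal (S w) \<le> ereal (real_of_ereal (cond_esssup M G S w))" by simp
  then show ?case by simp
qed

lemma ce_meas_real: "(\<lambda>w. real_of_ereal (cond_esssup M G S w)) \<in> borel_measurable G"
  using ce_meas[of S] by measurable

end


lemma lin_aux: fixes x y u b :: real shows "x \<le> y + u \<Longrightarrow> y < b + u \<Longrightarrow> u < (x - b) / 2 \<Longrightarrow> False"
  by argo

context kprob
begin

lemma main_exists:
  fixes X :: "'w \<Rightarrow> 'k" and C :: real
  assumes XM: "X \<in> measurable M (kborel a)" and C: "0 \<le> C" and XC: "AE w in M. a (X w) \<le> C"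
  defines "BC \<equiv> {Z. Z \<in> measurable G (kborel a) \<and> (\<forall>w. a (Z w) \<le> C)}"
  defines "ph \<equiv> \<lambda>Z w. real_of_ereal (cond_esssup M G (\<lambda>v. a (X v - Z v)) w)"
  shows "\<exists>Y\<in>BC. \<forall>Z\<in>BC. AE w in M. ph Y w \<le> ph Z w"
proof -
  define K where "K = max C 1"
  have K: "C \<le> K" "0 \<le> K" "1 \<le> K" unfolding K_def by auto
  have bndZ: "bnd (\<lambda>v. a (X v - Z v)) K" if Z: "Z \<in> BC" for Z
  proof -
    have ZM: "Z \<in> measurable M (kborel a)" using Z measG_M unfolding BC_def by blast
    have "AE w in M. 0 \<le> a (X w - Z w) \<and> a (X w - Z w) \<le> K"
      using XC
    proof eventually_elim
      case (elim w)
      have z: "a (Z w) \<le> C" using Z unfolding BC_def by blast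
      have mx: "max (a (X w)) (a (Z w)) \<le> C" using z elim by simp
      have "a (X w - Z w) \<le> K" using a_diff_le[of "X w" "Z w"] K(1) mx by linarith
      then show ?case by simp
    qed
    then show ?thesis unfolding bnd_def using borel_measurable_adiff[OF XM ZM] by simp
  qed
  have phG: "ph Z \<in> borel_measurable G" for Z unfolding ph_def by (rule ce_meas_real)
  have phM: "ph Z \<in> borel_measurable M" for Z using measG_M[OF phG] .
  have phb: "AE w in M. 0 \<le> ph Z w \<and> ph Z w \<le> K" if "Z \<in> BC" for Z
    using ce_props[OF bndZ[OF that]] unfolding ph_def by (auto elim!: AE_mp)
  have phu: "AE w in M. a (X w - Z w) \<le> ph Z w" if "Z \<in> BC" for Z
    using ce_upper_real[OF bndZ[OF that]] unfolding ph_def .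
  have dom: "AE w in M. ph Z w \<le> U w"
    if "Z \<in> BC" "U \<in> borel_measurable G" "AE w in M. 0 \<le> U w \<and> U w \<le> K" "AE w in M. a (X w - Z w) \<le> U w" for Z U
    using ce_dom[OF bndZ[OF that(1)] that(2,3,4)] unfolding ph_def .
  have phint: "integrable M (ph Z)" if "Z \<in> BC" for Z
  proof (rule integrable_const_bound[where B=K])
    show "AE w in M. norm (ph Z w) \<le> K" using phb[OF that] by eventually_elim auto
  qed (rule phM)
  define J where "J Z = integral\<^sup>L M (ph Z)" for Z
  have J0: "0 \<le> J Z" if "Z \<in> BC" for Z
    unfolding J_def using phb[OF that] by (intro integral_nonneg_AE) (auto elim!: AE_mp)
  define gl where "gl Z1 Z2 = (\<lambda>w. if ph Z1 w < ph Z2 w then Z1 w else Z2 w)" for Z1 Z2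
  have gl: "gl Z1 Z2 \<in> BC \<and> (AE w in M. ph (gl Z1 Z2) w \<le> min (ph Z1 w) (ph Z2 w))"
    if Z1: "Z1 \<in> BC" and Z2: "Z2 \<in> BC" for Z1 Z2
  proof
    have set: "{w \<in> space G. ph Z1 w < ph Z2 w} \<in> sets G"
      by (rule borel_measurable_less[OF phG phG])
    have "gl Z1 Z2 \<in> measurable G (kborel a)"
      unfolding gl_def by (rule measurable_If[OF _ _ set]) (use Z1 Z2 in \<open>auto simp: BC_def\<close>)
    moreover have "\<forall>w. a (gl Z1 Z2 w) \<le> C" using Z1 Z2 unfolding gl_def BC_def by auto
    ultimately show G1: "gl Z1 Z2 \<in> BC" unfolding BC_def by blast
    show "AE w in M. ph (gl Z1 Z2) w \<le> min (ph Z1 w) (ph Z2 w)"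
    proof (rule dom[OF G1])
      show "(\<lambda>w. min (ph Z1 w) (ph Z2 w)) \<in> borel_measurable G" using phG by measurable
      show "AE w in M. 0 \<le> min (ph Z1 w) (ph Z2 w) \<and> min (ph Z1 w) (ph Z2 w) \<le> K"
        using phb[OF Z1] phb[OF Z2] by eventually_elim auto
      show "AE w in M. a (X w - gl Z1 Z2 w) \<le> min (ph Z1 w) (ph Z2 w)"
        using phu[OF Z1] phu[OF Z2] by eventually_elim (auto simp: gl_def)
    qed
  qed
  have zero: "(\<lambda>_. 0) \<in> BC" unfolding BC_def using C by simp
  then have ne: "J ` BC \<noteq> {}" by blast
  have bdd: "bdd_below (J ` BC)" using J0 by (intro bdd_belowI[of _ 0]) auto
  define \<beta> where "\<beta> = Inf (J ` BC)"
  have "\<forall>n. \<exists>Z. Z \<in> BC \<and> J Z < \<beta> + 1 / Suc n"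
  proof
    fix n :: nat
    have "Inf (J ` BC) < \<beta> + 1 / Suc n" unfolding \<beta>_def by simp
    from cInf_lessD[OF ne this] show "\<exists>Z. Z \<in> BC \<and> J Z < \<beta> + 1 / Suc n" by blast
  qed
  from choice[OF this] obtain Zs where Zs: "\<And>n. Zs n \<in> BC" "\<And>n. J (Zs n) < \<beta> + 1 / Suc n" by blast
  define W where "W = rec_nat (Zs 0) (\<lambda>n Wn. gl (Zs (Suc n)) Wn)"
  have W0: "W 0 = Zs 0" and WS: "W (Suc n) = gl (Zs (Suc n)) (W n)" for n unfolding W_def by simp_all
  have WB: "W n \<in> BC" for n
    by (induction n) (simp_all add: W0 WS Zs gl)
  have Wdec: "AE w in M. ph (W (Suc n)) w \<le> ph (W n) w" for n
    using gl[OF Zs(1)[of "Suc n"] WB[of n]] unfolding WS[symmetric] by (auto elim!: AE_mp)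
  have WZ: "AE w in M. ph (W n) w \<le> ph (Zs n) w" for n
  proof (cases n)
    case 0 then show ?thesis by (simp add: W0)
  next
    case (Suc m)
    then show ?thesis
      using gl[OF Zs(1)[of "Suc m"] WB[of m]] unfolding WS[symmetric] by (auto elim!: AE_mp)
  qed
  have JW: "J (W n) < \<beta> + 1 / Suc n" for n
  proof -
    have "J (W n) \<le> J (Zs n)" unfolding J_def
      by (rule integral_mono_AE[OF phint[OF WB] phint[OF Zs(1)] WZ])
    then show ?thesis using Zs(2)[of n] by linarith
  qed
  have WM: "W n \<in> measurable G (kborel a)" and Wbd: "a (W n w) \<le> C" for n w
    using WB[of n] unfolding BC_def by auto
  obtain Y where YM: "Y \<in> measurable G (kborel a)" and Ybd: "\<forall>w. a (Y w) \<le> C"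
    and clus: "\<forall>w e j. 0 < e \<longrightarrow> (\<exists>n\<ge>j. a (W n w - Y w) < e)"
    using cluster_select[of W G C, OF WM Wbd] by blast
  have YB: "Y \<in> BC" unfolding BC_def using YM Ybd by blast
  have Yle: "AE w in M. ph Y w \<le> max (ph (W n) w) (1 / Suc k)" for n k
  proof (rule dom[OF YB])
    show "(\<lambda>w. max (ph (W n) w) (1 / real (Suc k))) \<in> borel_measurable G" using phG by measurable
    show "AE w in M. 0 \<le> max (ph (W n) w) (1 / real (Suc k)) \<and> max (ph (W n) w) (1 / real (Suc k)) \<le> K"
    proof -
      have "1 / real (Suc k) \<le> 1" by simp
      then have k1: "1 / real (Suc k) \<le> K" using K(3) by linarith
      show ?thesis using phb[OF WB[of n]] by eventually_elim (use k1 in auto)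
    qed
    have "AE w in M. \<forall>m. a (X w - W m w) \<le> ph (W m) w" unfolding AE_all_countable using phu[OF WB] by blast
    moreover have "AE w in M. \<forall>m. ph (W (Suc m)) w \<le> ph (W m) w" unfolding AE_all_countable using Wdec by blast
    ultimately show "AE w in M. a (X w - Y w) \<le> max (ph (W n) w) (1 / real (Suc k))"
    proof eventually_elim
      case (elim w)
      have mono: "ph (W m) w \<le> ph (W n) w" if "n \<le> m" for m
        using that
      proof (induction m rule: dec_induct)
        case (step m)
        then show ?case using elim(2)[rule_format, of m] by linarith
      qed simp
      obtain m where m: "m \<ge> n" "a (W m w - Y w) < 1 / Suc k" using clus by (meson of_nat_0_less_iff zero_less_Suc divide_pos_pos zero_less_one)
      have "a (X w - Y w) \<le> max (a (X w - W m w)) (a (W m w - Y w))" by (rule a_tri)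
      also have "\<dots> \<le> max (ph (W n) w) (1 / Suc k)"
        using elim(1)[rule_format, of m] mono[OF m(1)] m(2) by auto
      finally show ?case .
    qed
  qed
  have JY: "J Y \<le> \<beta>"
  proof (rule ccontr)
    assume "\<not> ?thesis"
    then have e: "0 < J Y - \<beta>" by simp
    obtain n where n: "1 / real (Suc n) < (J Y - \<beta>) / 2"
      using e by (metis half_gt_zero nat_approx_posE of_nat_Suc)
    have "J Y \<le> J (W n) + 1 / Suc n"
    proof -
      have "J Y \<le> integral\<^sup>L M (\<lambda>w. ph (W n) w + 1 / Suc n)" unfolding J_def
      proof (rule integral_mono_AE[OF phint[OF YB]])
        show "integrable M (\<lambda>w. ph (W n) w + 1 / real (Suc n))"
          using phint[OF WB[of n]] by simp
        show "AE w in M. ph Y w \<le> ph (W n) w + 1 / real (Suc n)"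
          using Yle[of n n] phb[OF WB[of n]]
        proof eventually_elim
          case (elim w)
          have "0 \<le> 1 / real (Suc n)" by simp
          then have "max (ph (W n) w) (1 / real (Suc n)) \<le> ph (W n) w + 1 / real (Suc n)"
            using elim(2) by (simp add: max_def)
          then show ?case using elim(1) by linarith
        qed
      qed
      also have "\<dots> = J (W n) + 1 / Suc n"
        unfolding J_def using phint[OF WB[of n]] by (simp add: prob_space)
      finally show ?thesis .
    qed
    moreover note JW[of n] n
    ultimately show False by (rule lin_aux)
  qed
  show ?thesis
  proof (intro bexI[OF _ YB] ballI)
    fix Z assume Z: "Z \<in> BC"
    have g: "gl Y Z \<in> BC" "AE w in M. ph (gl Y Z) w \<le> min (ph Y w) (ph Z w)" using gl[OF YB Z] by auto
    have "\<beta> \<le> J (gl Y Z)" unfolding \<beta>_def by (rule cInf_lower[OF _ bdd]) (use g in blast)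
    define f where "f w = ph Y w - min (ph Y w) (ph Z w)" for w
    have fint: "integrable M f" unfolding f_def using phint[OF YB] phint[OF Z] by simp
    have minint: "integrable M (\<lambda>w. min (ph Y w) (ph Z w))" using phint[OF YB] phint[OF Z] by simp
    have "J (gl Y Z) \<le> integral\<^sup>L M (\<lambda>w. min (ph Y w) (ph Z w))"
      unfolding J_def by (rule integral_mono_AE[OF phint[OF g(1)] minint g(2)])
    then have "integral\<^sup>L M f \<le> 0"
      unfolding f_def using JY \<open>\<beta> \<le> J (gl Y Z)\<close> phint[OF YB] minint unfolding J_def by simp
    moreover have "0 \<le> integral\<^sup>L M f" unfolding f_def by (intro integral_nonneg_AE) auto
    ultimately have "integral\<^sup>L M f = 0" by simp
    then have "AE w in M. f w = 0"
      using integral_nonneg_eq_0_iff_AE[OF fint] unfolding f_def by auto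
    then show "AE w in M. ph Y w \<le> ph Z w" unfolding f_def by eventually_elim auto
  qed
qed

end


theorem mainTheorem9:
  fixes M G :: "'w measure" and a :: "'k::field \<Rightarrow> real" and X :: "'w \<Rightarrow> 'k"
  assumes "prob_space M" and "local_field a" and "subalgebra M G" and "Linf M a X"
  shows "cond_exp_K M G a X \<noteq> {}"
proof -
  interpret kprob a M G
    by (intro kprob.intro nafield.intro ksetting.intro) (use assms in auto)
  obtain C0 where XM: "X \<in> measurable M (kborel a)" and XC0: "AE w in M. a (X w) \<le> C0"
    using assms(4) unfolding Linf_def by blast
  define C where "C = max C0 0"
  have C: "0 \<le> C" unfolding C_def by simp
  have XC: "AE w in M. a (X w) \<le> C" using XC0 unfolding C_def by (auto elim!: AE_mp)
  define BC where "BC = {Z. Z \<in> measurable G (kborel a) \<and> (\<forall>w. a (Z w) \<le> C)}"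
  define ph where "ph = (\<lambda>Z w. real_of_ereal (cond_esssup M G (\<lambda>v. a (X v - Z v)) w))"
  obtain Y where YB: "Y \<in> BC" and Ymin: "\<And>Z. Z \<in> BC \<Longrightarrow> AE w in M. ph Y w \<le> ph Z w"
    using main_exists[OF XM C XC] unfolding BC_def ph_def by blast
  have YM: "Y \<in> measurable G (kborel a)" and Ybd: "\<And>w. a (Y w) \<le> C" using YB unfolding BC_def by auto
  have bndC: "bnd (\<lambda>v. a (X v - Z v)) K"
    if Z: "Z \<in> measurable G (kborel a)" and ZK: "AE w in M. a (Z w) \<le> K" and CK: "C \<le> K" for Z K
  proof -
    have ZM: "Z \<in> measurable M (kborel a)" using measG_M[OF Z] .
    have "AE w in M. 0 \<le> a (X w - Z w) \<and> a (X w - Z w) \<le> K"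
      using XC ZK
    proof eventually_elim
      case (elim w)
      have mx: "max (a (X w)) (a (Z w)) \<le> K" using elim CK by simp
      have "a (X w - Z w) \<le> K" using a_diff_le[of "X w" "Z w"] mx by linarith
      then show ?case by simp
    qed
    then show ?thesis unfolding bnd_def using borel_measurable_adiff[OF XM ZM] by simp
  qed
  have "Y \<in> cond_exp_K M G a X"
    unfolding cond_exp_K_def
  proof (intro CollectI conjI allI impI)
    show "LinfG M G a Y" unfolding LinfG_def using YM Ybd by auto
    fix Z assume "LinfG M G a Z"
    then obtain KZ where ZM: "Z \<in> measurable G (kborel a)" and ZK: "AE w in M. a (Z w) \<le> KZ"
      unfolding LinfG_def by blast
    define K where "K = max C KZ"
    have ZK': "AE w in M. a (Z w) \<le> K" using ZK unfolding K_def by (auto elim!: AE_mp)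
    define Z' where "Z' = (\<lambda>w. if a (Z w) \<le> C then Z w else 0)"
    have set: "{w \<in> space G. a (Z w) \<le> C} \<in> sets G"
      by (rule borel_measurable_le[OF borel_measurable_a[OF ZM] borel_measurable_const])
    have Z'M: "Z' \<in> measurable G (kborel a)"
      unfolding Z'_def by (rule measurable_If[OF ZM measurable_const set]) simp
    have Z'B: "Z' \<in> BC" unfolding BC_def using Z'M C by (auto simp: Z'_def)
    have "\<And>w. a (Y w) \<le> K" using Ybd unfolding K_def by (meson max.coboundedI1)
    then have bY: "bnd (\<lambda>v. a (X v - Y v)) K" by (intro bndC[OF YM]) (auto simp: K_def)
    have "\<And>w. a (Z' w) \<le> K" unfolding Z'_def K_def using C by (simp add: max.coboundedI1)
    then have bZ': "bnd (\<lambda>v. a (X v - Z' v)) K" by (intro bndC[OF Z'M]) (auto simp: K_def)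
    have bZ: "bnd (\<lambda>v. a (X v - Z v)) K" by (rule bndC[OF ZM ZK']) (simp add: K_def)
    have le: "AE w in M. a (X w - Z' w) \<le> a (X w - Z w)"
      using XC
    proof eventually_elim
      case (elim w)
      show ?case
      proof (cases "a (Z w) \<le> C")
        case True then show ?thesis by (simp add: Z'_def)
      next
        case False
        then have "a (X w) < a (Z w)" using elim by simp
        then have "a (Z w) \<le> a (X w - Z w)" by (rule a_big)
        then show ?thesis using False elim by (simp add: Z'_def)
      qed
    qed
    have m: "AE w in M. cond_esssup M G (\<lambda>v. a (X v - Z' v)) w \<le> cond_esssup M G (\<lambda>v. a (X v - Z v)) w"
      by (rule ce_mono[OF bZ' bZ le])
    show "AE w in M. cond_norm M G a (\<lambda>v. X v - Y v) w \<le> cond_norm M G a (\<lambda>v. X v - Z v) w"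
      unfolding cond_norm_def
      using m Ymin[OF Z'B] ce_props[OF bY] ce_props[OF bZ']
    proof eventually_elim
      case (elim w)
      have "cond_esssup M G (\<lambda>v. a (X v - Y v)) w = ereal (ph Y w)" using elim(3) unfolding ph_def by simp
      also have "\<dots> \<le> ereal (ph Z' w)" using elim(2) by simp
      also have "\<dots> = cond_esssup M G (\<lambda>v. a (X v - Z' v)) w" using elim(4) unfolding ph_def by simp
      also have "\<dots> \<le> cond_esssup M G (\<lambda>v. a (X v - Z v)) w" using elim(1) .
      finally show ?case .
    qed
  qed
  then show ?thesis by blast
qed


end
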